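(* Let $\sigma_0,\sigma_\epsilon>0$ with $\sigma_0\neq\sigma_\epsilon$, and $\theta_0\in\mathbb{R}$. Let the prior be $\Theta\sim\mathrm{Laplace}(\theta_0,\sigma_0)$ and the signal $X=\Theta+\epsilon$ with $\epsilon\sim\mathrm{Laplace}(0,\sigma_\epsilon)$ independent of $\Theta$. Put $x_0=x-\theta_0$, $a_0=1/\sigma_0$, $a_\epsilon=1/\sigma_\epsilon$, $x^*=\frac{2a_0}{a_\epsilon^2-a_0^2}$. Then the posterior mean $\theta_1=\mathbb{E}[\Theta\mid X=x]$ is $$\theta_1=\theta_0+\operatorname{sgn}(x_0)\,\frac{a_\epsilon}{a_\epsilon e^{(a_\epsilon-a_0)|x_0|}-a_0}\Bigl((|x_0|-x^* )e^{(a_\epsilon-a_0)|x_0|}+x^*\Bigr).$$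
   Context: $\mathrm{Laplace}(\mu,s)$ has density $t\mapsto\frac{1}{2s}e^{-|t-\mu|/s}$. The posterior mean is $\theta_1=\frac{\int\theta f_\Theta(\theta)l_\epsilon(x-\theta)d\theta}{\int f_\Theta(\theta)l_\epsilon(x-\theta)d\theta}$ with $f_\Theta,l_\epsilon$ the prior and noise densities. *)

theory Defs
  imports "HOL-Analysis.Analysis"
begin

definition laplace_density :: "real \<Rightarrow> real \<Rightarrow> real \<Rightarrow> real" where
  "laplace_density mu s t = exp (- \<bar>t - mu\<bar> / s) / (2 * s)"

definition posterior_mean :: "(real \<Rightarrow> real) \<Rightarrow> (real \<Rightarrow> real) \<Rightarrow> real \<Rightarrow> real" where
  "posterior_mean f l x =
     (\<integral>\<theta>. \<theta> * f \<theta> * l (x - \<theta>) \<partial>lborel) / (\<integral>\<theta>. f \<theta> * l (x - \<theta>) \<partial>lborel)"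

end

theory Submission
  imports Defs "HOL-Real_Asymp.Real_Asymp"
begin


lemma alg0:
  fixes a b y E p q :: real
  assumes "p = a + b" "q = b - a" "p \<noteq> 0" "q \<noteq> 0" "b * E - a \<noteq> 0"
  shows "(-1/p^2 + (y/q-1/q^2)*E + 1/q^2 + E*(y/p+1/p^2)) /
          (1/p + (E-1)/q + E/p) =
         b/(b*E-a) * ((y - 2*a/(p*q))*E + 2*a/(p*q))"
proof -
  have d: "1/p + (E-1)/q + E/p = 2*(b*E - a)/(p*q)"
    using assms(3,4) by (simp add: field_simps) (simp add: assms(1,2) algebra_simps)
  show ?thesis unfolding d using assms(3-5)
    by (simp add: field_simps power2_eq_square) (simp add: assms(1,2) algebra_simps)
qed

lemma alg:
  fixes a b y E :: real
  assumes "a > 0" "b > 0" "a \<noteq> b" "b * E - a \<noteq> 0"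
  shows "(-1/(a+b)^2 + (y/(b-a)-1/(b-a)^2)*E + 1/(b-a)^2 + E*(y/(a+b)+1/(a+b)^2)) /
          (1/(a+b) + (E-1)/(b-a) + E/(a+b)) =
         b/(b*E-a) * ((y - 2*a/(b^2-a^2))*E + 2*a/(b^2-a^2))"
proof -
  have e: "b^2 - a^2 = (a+b)*(b-a)" by (simp add: algebra_simps power2_eq_square)
  show ?thesis unfolding e
    by (rule alg0[of "a+b" a b "b-a"]) (use assms in auto)
qed

lemma R0:
  fixes c y :: real assumes "c > 0"
  shows "set_integrable lborel (einterval y \<infinity>) (\<lambda>u. exp (-c*u))"
    "(LBINT u=ereal y..\<infinity>. exp (-c*u)) = exp (-c*y)/c"
proof -
  let ?F = "\<lambda>u. - exp (-c*u)/c"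
  have A: "((?F \<circ> real_of_ereal) \<longlongrightarrow> ?F y) (at_right (ereal y))"
    unfolding ereal_tendsto_simps using assms by (auto intro!: tendsto_eq_intros)
  have B: "((?F \<circ> real_of_ereal) \<longlongrightarrow> 0) (at_left \<infinity>)"
    unfolding ereal_tendsto_simps using assms by real_asymp
  have D: "\<And>x. DERIV ?F x :> exp (-c*x)" using assms by (auto intro!: derivative_eq_intros simp: field_simps)
  show "set_integrable lborel (einterval y \<infinity>) (\<lambda>u. exp (-c*u))"
    by (rule interval_integral_FTC_nonneg(1)[OF _ D _ _ A B]) auto
  show "(LBINT u=ereal y..\<infinity>. exp (-c*u)) = exp (-c*y)/c"
    by (subst interval_integral_FTC_nonneg(2)[OF _ D _ _ A B]) auto
qed

lemma R1:
  fixes c y :: real assumes "c > 0" "y \<ge> 0"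
  shows "set_integrable lborel (einterval y \<infinity>) (\<lambda>u. u * exp (-c*u))"
    "(LBINT u=ereal y..\<infinity>. u * exp (-c*u)) = (y/c + 1/c^2) * exp (-c*y)"
proof -
  let ?F = "\<lambda>u. - (u/c + 1/c^2) * exp (-c*u)"
  have A: "((?F \<circ> real_of_ereal) \<longlongrightarrow> ?F y) (at_right (ereal y))"
    unfolding ereal_tendsto_simps using assms by (auto intro!: tendsto_eq_intros)
  have B: "((?F \<circ> real_of_ereal) \<longlongrightarrow> 0) (at_left \<infinity>)"
    unfolding ereal_tendsto_simps using assms by real_asymp
  have D: "\<And>x. DERIV ?F x :> x * exp (-c*x)" using assms
    apply (auto intro!: derivative_eq_intros) by (auto intro!: derivative_eq_intros simp: field_simps power2_eq_square)
  have N: "AE x in lborel. ereal y < ereal x \<longrightarrow> ereal x < \<infinity> \<longrightarrow> 0 \<le> x * exp (-c*x)"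
    using assms by auto
  show "set_integrable lborel (einterval y \<infinity>) (\<lambda>u. u * exp (-c*u))"
    by (rule interval_integral_FTC_nonneg(1)[OF _ D _ N A B]) auto
  show "(LBINT u=ereal y..\<infinity>. u * exp (-c*u)) = (y/c + 1/c^2) * exp (-c*y)"
    by (subst interval_integral_FTC_nonneg(2)[OF _ D _ N A B]) (auto simp: algebra_simps)
qed

lemma L0:
  fixes c :: real assumes "c > 0"
  shows "set_integrable lborel (einterval (-\<infinity>) 0) (\<lambda>u. exp (c*u))"
    "(LBINT u=-\<infinity>..0. exp (c*u)) = 1/c"
proof -
  let ?F = "\<lambda>u. exp (c*u)/c"
  have B: "((?F \<circ> real_of_ereal) \<longlongrightarrow> ?F 0) (at_left (ereal 0))"
    unfolding ereal_tendsto_simps using assms by (auto intro!: tendsto_eq_intros)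
  have A: "((?F \<circ> real_of_ereal) \<longlongrightarrow> 0) (at_right (-\<infinity>))"
    unfolding ereal_tendsto_simps using assms by real_asymp
  have D: "\<And>x. DERIV ?F x :> exp (c*x)" using assms by (auto intro!: derivative_eq_intros simp: field_simps)
  show "set_integrable lborel (einterval (-\<infinity>) 0) (\<lambda>u. exp (c*u))"
    using interval_integral_FTC_nonneg(1)[OF _ D _ _ A B] by (auto simp: zero_ereal_def)
  show "(LBINT u=-\<infinity>..0. exp (c*u)) = 1/c"
    using interval_integral_FTC_nonneg(2)[OF _ D _ _ A B] by (auto simp: zero_ereal_def)
qed

lemma L1:
  fixes c :: real assumes "c > 0"
  shows "set_integrable lborel (einterval (-\<infinity>) 0) (\<lambda>u. - u * exp (c*u))"
    "(LBINT u=-\<infinity>..0. - u * exp (c*u)) = 1/c^2"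
proof -
  let ?F = "\<lambda>u. (1/c^2 - u/c) * exp (c*u)"
  have B: "((?F \<circ> real_of_ereal) \<longlongrightarrow> ?F 0) (at_left (ereal 0))"
    unfolding ereal_tendsto_simps using assms by (auto intro!: tendsto_eq_intros)
  have A: "((?F \<circ> real_of_ereal) \<longlongrightarrow> 0) (at_right (-\<infinity>))"
    unfolding ereal_tendsto_simps using assms by real_asymp
  have D: "\<And>x. DERIV ?F x :> - x * exp (c*x)" using assms
    apply (auto intro!: derivative_eq_intros) by (auto intro!: derivative_eq_intros simp: field_simps power2_eq_square)
  have N: "AE x in lborel. -\<infinity> < ereal x \<longrightarrow> ereal x < ereal 0 \<longrightarrow> 0 \<le> - x * exp (c*x)"
    by (intro AE_I2 impI) (simp add: mult_nonpos_nonneg)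
  show "set_integrable lborel (einterval (-\<infinity>) 0) (\<lambda>u. - u * exp (c*u))"
    using interval_integral_FTC_nonneg(1)[OF _ D _ N A B] by (auto simp: zero_ereal_def)
  show "(LBINT u=-\<infinity>..0. - u * exp (c*u)) = 1/c^2"
    using interval_integral_FTC_nonneg(2)[OF _ D _ N A B] by (auto simp: zero_ereal_def)
qed

lemma M0:
  fixes d y :: real assumes "d \<noteq> 0" "y \<ge> 0"
  shows "set_integrable lborel (einterval 0 y) (\<lambda>u. exp (d*u))"
    "(LBINT u=0..y. exp (d*u)) = (exp (d*y) - 1)/d"
proof -
  have "interval_lebesgue_integrable lborel 0 y (\<lambda>u. exp (d*u))"
    using assms unfolding zero_ereal_def by (intro interval_integrable_continuous_on) (auto intro!: continuous_intros)
  then show "set_integrable lborel (einterval 0 y) (\<lambda>u. exp (d*u))"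
    using assms by (simp add: interval_lebesgue_integrable_def zero_ereal_def)
  have "(LBINT u=ereal 0..y. exp (d*u)) = exp (d*y)/d - exp (d*0)/d"
    by (rule interval_integral_FTC_finite)
       (use assms in \<open>auto intro!: continuous_intros derivative_eq_intros simp: has_real_derivative_iff_has_vector_derivative[symmetric]\<close>)
  then show "(LBINT u=0..y. exp (d*u)) = (exp (d*y) - 1)/d" by (simp add: diff_divide_distrib zero_ereal_def)
qed

lemma M1:
  fixes d y :: real assumes "d \<noteq> 0" "y \<ge> 0"
  shows "set_integrable lborel (einterval 0 y) (\<lambda>u. u * exp (d*u))"
    "(LBINT u=0..y. u * exp (d*u)) = (y/d - 1/d^2) * exp (d*y) + 1/d^2"
proof -
  have "interval_lebesgue_integrable lborel 0 y (\<lambda>u. u * exp (d*u))"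
    using assms unfolding zero_ereal_def by (intro interval_integrable_continuous_on) (auto intro!: continuous_intros)
  then show "set_integrable lborel (einterval 0 y) (\<lambda>u. u * exp (d*u))"
    using assms by (simp add: interval_lebesgue_integrable_def zero_ereal_def)
  have "(LBINT u=ereal 0..y. u * exp (d*u)) = (y/d - 1/d^2) * exp (d*y) - (0/d - 1/d^2) * exp (d*0)"
    by (rule interval_integral_FTC_finite)
       (use assms in \<open>auto intro!: continuous_intros derivative_eq_intros simp: has_real_derivative_iff_has_vector_derivative[symmetric] field_simps power2_eq_square\<close>)
  then show "(LBINT u=0..y. u * exp (d*u)) = (y/d - 1/d^2) * exp (d*y) + 1/d^2" by (simp add: zero_ereal_def)
qed


lemma glue3:
  fixes f :: "real \<Rightarrow> real" and y :: real
  assumes y: "y \<ge> 0"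
    and i1: "set_integrable lborel (einterval (-\<infinity>) 0) f"
    and i2: "set_integrable lborel (einterval 0 y) f"
    and i3: "set_integrable lborel (einterval y \<infinity>) f"
  shows "integrable lborel f"
    "integral\<^sup>L lborel f = (LBINT u=-\<infinity>..0. f u) + (LBINT u=0..y. f u) + (LBINT u=ereal y..\<infinity>. f u)"
proof -
  let ?B = "einterval (-\<infinity>) 0 \<union> einterval 0 y \<union> einterval y \<infinity>"
  have "set_integrable lborel ?B f"
    by (intro set_integrable_Un i1 i2 i3) auto
  moreover have "set_integrable lborel UNIV f = set_integrable lborel ?B f"
    by (rule set_integrable_discrete_difference[where X="{0, y}"])
       (auto simp: einterval_def zero_ereal_def)
  ultimately have U: "set_integrable lborel UNIV f" by simp
  then show I: "integrable lborel f" by (simp add: set_integrable_def)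
  have W: "interval_lebesgue_integrable lborel (-\<infinity>) \<infinity> f"
    using U by (simp add: interval_lebesgue_integrable_def)
  have W2: "interval_lebesgue_integrable lborel 0 \<infinity> f"
    using U by (auto simp: interval_lebesgue_integrable_def intro: set_integrable_subset)
  have "integral\<^sup>L lborel f = (LBINT u=-\<infinity>..\<infinity>. f u)"
    by (simp add: interval_lebesgue_integral_def set_lebesgue_integral_def)
  also have "\<dots> = (LBINT u=-\<infinity>..0. f u) + (LBINT u=0..\<infinity>. f u)"
    by (rule interval_integral_sum[symmetric]) (use W in \<open>simp add: min_def max_def\<close>)
  also have "(LBINT u=0..\<infinity>. f u) = (LBINT u=0..y. f u) + (LBINT u=ereal y..\<infinity>. f u)"
    by (rule interval_integral_sum[symmetric]) (use W2 y in \<open>simp add: min_def max_def zero_ereal_def\<close>)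
  finally show "integral\<^sup>L lborel f = (LBINT u=-\<infinity>..0. f u) + (LBINT u=0..y. f u) + (LBINT u=ereal y..\<infinity>. f u)"
    by simp
qed


lemma core:
  fixes a b y :: real
  assumes a: "a > 0" and b: "b > 0" and ab: "a \<noteq> b" and y: "y \<ge> 0"
  defines "g \<equiv> \<lambda>u. exp (- a * \<bar>u\<bar> - b * \<bar>y - u\<bar>)"
  defines "E \<equiv> exp ((b - a) * y)"
  shows "integrable lborel g" "integrable lborel (\<lambda>u. u * g u)"
    "integral\<^sup>L lborel g = exp (-b*y) * (1/(a+b) + (E-1)/(b-a) + E/(a+b))"
    "integral\<^sup>L lborel (\<lambda>u. u * g u) = exp (-b*y) *
       (-1/(a+b)^2 + (y/(b-a)-1/(b-a)^2)*E + 1/(b-a)^2 + E*(y/(a+b)+1/(a+b)^2))"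
proof -
  have ab1: "a + b > 0" and ab2: "b - a \<noteq> 0" using a b ab by auto
  have gL: "g u = exp (-b*y) * exp ((a+b)*u)" if "u < 0" for u
    using that y unfolding g_def by (simp add: exp_add[symmetric] algebra_simps)
  have gM: "g u = exp (-b*y) * exp ((b-a)*u)" if "0 < u" "u < y" for u
    using that y unfolding g_def by (simp add: exp_add[symmetric] algebra_simps)
  have gR: "g u = exp (b*y) * exp (-(a+b)*u)" if "y < u" for u
    using that y unfolding g_def by (simp add: exp_add[symmetric] algebra_simps)
  have eR: "exp (b*y) * exp (-(a+b)*y) = exp (-b*y) * E"
    unfolding E_def by (simp add: exp_add[symmetric] algebra_simps)
  note L0' = L0[OF ab1] and L1' = L1[OF ab1] and M0' = M0[OF ab2 y] and M1' = M1[OF ab2 y]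
    and R0' = R0[OF ab1, of y] and R1' = R1[OF ab1 y]
  have iL: "set_integrable lborel (einterval (-\<infinity>) 0) g"
    by (subst set_integrable_cong[OF refl refl, of _ _ "\<lambda>u. exp (-b*y) * exp ((a+b)*u)"])
       (auto simp: gL einterval_iff intro!: set_integrable_mult_right L0')
  have iM: "set_integrable lborel (einterval 0 y) g"
    by (subst set_integrable_cong[OF refl refl, of _ _ "\<lambda>u. exp (-b*y) * exp ((b-a)*u)"])
       (auto simp: gM einterval_iff intro!: set_integrable_mult_right M0')
  have iR: "set_integrable lborel (einterval y \<infinity>) g"
    by (subst set_integrable_cong[OF refl refl, of _ _ "\<lambda>u. exp (b*y) * exp (-(a+b)*u)"])
       (auto simp: gR einterval_iff intro!: set_integrable_mult_right R0'[simplified])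
  have L1u: "set_integrable lborel (einterval (-\<infinity>) 0) (\<lambda>u. u * exp ((a+b)*u))"
    using set_integrable_mult_right[OF L1'(1), of "-1"] by simp
  have jL: "set_integrable lborel (einterval (-\<infinity>) 0) (\<lambda>u. u * g u)"
    by (subst set_integrable_cong[OF refl refl, of _ _ "\<lambda>u. exp (-b*y) * (u * exp ((a+b)*u))"])
       (auto simp: gL einterval_iff intro!: set_integrable_mult_right L1u)
  have jM: "set_integrable lborel (einterval 0 y) (\<lambda>u. u * g u)"
    by (subst set_integrable_cong[OF refl refl, of _ _ "\<lambda>u. exp (-b*y) * (u * exp ((b-a)*u))"])
       (auto simp: gM einterval_iff intro!: set_integrable_mult_right M1')
  have jR: "set_integrable lborel (einterval y \<infinity>) (\<lambda>u. u * g u)"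
    by (subst set_integrable_cong[OF refl refl, of _ _ "\<lambda>u. exp (b*y) * (u * exp (-(a+b)*u))"])
       (auto simp: gR einterval_iff intro!: set_integrable_mult_right R1'[simplified])
  note G = glue3[OF y iL iM iR] and H = glue3[OF y jL jM jR]
  show "integrable lborel g" "integrable lborel (\<lambda>u. u * g u)" using G H by auto
  have IL: "(LBINT u=-\<infinity>..0. g u) = exp (-b*y) * (1/(a+b))"
  proof -
    have "(LBINT u=-\<infinity>..0. g u) = (LBINT u=-\<infinity>..0. exp (-b*y) * exp ((a+b)*u))"
      by (rule interval_integral_cong) (auto simp: gL einterval_def zero_ereal_def)
    then show ?thesis using L0'(2) by simp
  qed
  have IM: "(LBINT u=0..y. g u) = exp (-b*y) * ((E-1)/(b-a))"
  proof -
    have "(LBINT u=0..y. g u) = (LBINT u=0..y. exp (-b*y) * exp ((b-a)*u))"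
      by (rule interval_integral_cong) (use y in \<open>auto simp: gM einterval_def zero_ereal_def\<close>)
    then show ?thesis using M0'(2) by (simp add: E_def)
  qed
  have IR: "(LBINT u=ereal y..\<infinity>. g u) = exp (-b*y) * (E/(a+b))"
  proof -
    have "(LBINT u=ereal y..\<infinity>. g u) = (LBINT u=ereal y..\<infinity>. exp (b*y) * exp (-(a+b)*u))"
      by (rule interval_integral_cong) (auto simp: gR einterval_def)
    then show ?thesis using R0'(2) eR by (simp add: mult.assoc[symmetric])
  qed
  show "integral\<^sup>L lborel g = exp (-b*y) * (1/(a+b) + (E-1)/(b-a) + E/(a+b))"
    using G(2) IL IM IR by (simp add: algebra_simps)
  have JL: "(LBINT u=-\<infinity>..0. u * g u) = exp (-b*y) * (-1/(a+b)^2)"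
  proof -
    have 1: "(LBINT u=-\<infinity>..0. u * g u) = (LBINT u=-\<infinity>..0. exp (-b*y) * (u * exp ((a+b)*u)))"
    proof (rule interval_integral_cong)
      fix u assume "u \<in> einterval (min (-\<infinity>) 0) (max (-\<infinity>) 0)"
      then have "u < 0" by (simp add: einterval_iff)
      then show "u * g u = exp (-b*y) * (u * exp ((a+b)*u))" using gL[of u] by simp
    qed
    have "- (LBINT u=-\<infinity>..0. u * exp ((a + b) * u)) = 1/(a+b)^2"
      using L1'(2) by (simp only: interval_lebesgue_integral_uminus mult_minus_left)
    then have 2: "(LBINT u=-\<infinity>..0. u * exp ((a + b) * u)) = - (1/(a+b)^2)"
      by linarith
    show ?thesis unfolding 1 interval_lebesgue_integral_mult_right 2 by simp
  qed
  have JM: "(LBINT u=0..y. u * g u) = exp (-b*y) * ((y/(b-a)-1/(b-a)^2)*E + 1/(b-a)^2)"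
  proof -
    have "(LBINT u=0..y. u * g u) = (LBINT u=0..y. exp (-b*y) * (u * exp ((b-a)*u)))"
      by (rule interval_integral_cong) (use y in \<open>auto simp: gM einterval_def zero_ereal_def\<close>)
    then show ?thesis using M1'(2) by (simp add: E_def)
  qed
  have JR: "(LBINT u=ereal y..\<infinity>. u * g u) = exp (-b*y) * (E*(y/(a+b)+1/(a+b)^2))"
  proof -
    have "(LBINT u=ereal y..\<infinity>. u * g u) = (LBINT u=ereal y..\<infinity>. exp (b*y) * (u * exp (-(a+b)*u)))"
      by (rule interval_integral_cong) (auto simp: gR einterval_def)
    also have "\<dots> = exp (b*y) * ((y/(a+b) + 1/(a+b)^2) * exp (-(a+b)*y))"
      by (simp only: interval_lebesgue_integral_mult_right R1'(2))
    also have "\<dots> = (y/(a+b) + 1/(a+b)^2) * (exp (b*y) * exp (-(a+b)*y))"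
      by (simp only: ac_simps)
    also have "\<dots> = exp (-b*y) * (E*(y/(a+b)+1/(a+b)^2))"
      unfolding eR by (simp only: ac_simps)
    finally show ?thesis .
  qed
  show "integral\<^sup>L lborel (\<lambda>u. u * g u) = exp (-b*y) *
       (-1/(a+b)^2 + (y/(b-a)-1/(b-a)^2)*E + 1/(b-a)^2 + E*(y/(a+b)+1/(a+b)^2))"
    unfolding H(2) JL JM JR by (simp only: distrib_left add.assoc)
qed


theorem mainTheorem11:
  fixes \<sigma>\<^sub>0 \<sigma>\<^sub>\<epsilon> \<theta>\<^sub>0 x :: real
  assumes "\<sigma>\<^sub>0 > 0" and "\<sigma>\<^sub>\<epsilon> > 0" and "\<sigma>\<^sub>0 \<noteq> \<sigma>\<^sub>\<epsilon>"
  shows "let x\<^sub>0 = x - \<theta>\<^sub>0; a\<^sub>0 = 1 / \<sigma>\<^sub>0; a\<^sub>\<epsilon> = 1 / \<sigma>\<^sub>\<epsilon>;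
             xs = 2 * a\<^sub>0 / (a\<^sub>\<epsilon>\<^sup>2 - a\<^sub>0\<^sup>2)
         in posterior_mean (laplace_density \<theta>\<^sub>0 \<sigma>\<^sub>0) (laplace_density 0 \<sigma>\<^sub>\<epsilon>) x =
            \<theta>\<^sub>0 + sgn x\<^sub>0 * (a\<^sub>\<epsilon> / (a\<^sub>\<epsilon> * exp ((a\<^sub>\<epsilon> - a\<^sub>0) * \<bar>x\<^sub>0\<bar>) - a\<^sub>0))
               * ((\<bar>x\<^sub>0\<bar> - xs) * exp ((a\<^sub>\<epsilon> - a\<^sub>0) * \<bar>x\<^sub>0\<bar>) + xs)"
proof -
  define a where "a = 1 / \<sigma>\<^sub>0"
  define b where "b = 1 / \<sigma>\<^sub>\<epsilon>"
  define x0 where "x0 = x - \<theta>\<^sub>0"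
  define y where "y = \<bar>x0\<bar>"
  define s :: real where "s = (if x0 < 0 then -1 else 1)"
  define E where "E = exp ((b - a) * y)"
  define g where "g = (\<lambda>u. exp (- a * \<bar>u\<bar> - b * \<bar>y - u\<bar>))"
  define K where "K = 1 / (2 * \<sigma>\<^sub>0) * (1 / (2 * \<sigma>\<^sub>\<epsilon>))"
  define D where "D = 1/(a+b) + (E-1)/(b-a) + E/(a+b)"
  define N where "N = -1/(a+b)^2 + (y/(b-a)-1/(b-a)^2)*E + 1/(b-a)^2 + E*(y/(a+b)+1/(a+b)^2)"
  define f where "f = laplace_density \<theta>\<^sub>0 \<sigma>\<^sub>0"
  define l where "l = laplace_density 0 \<sigma>\<^sub>\<epsilon>"
  have a: "a > 0" and b: "b > 0" using assms by (auto simp: a_def b_def)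
  have ab: "a \<noteq> b" using assms by (auto simp: a_def b_def)
  have y: "y \<ge> 0" by (simp add: y_def)
  have s: "\<bar>s\<bar> = 1" "s \<noteq> 0" "x0 = s * y" by (auto simp: s_def y_def)
  have K: "K > 0" using assms by (simp add: K_def)
  note C = core[OF a b ab y, folded g_def E_def]
  have C4: "integral\<^sup>L lborel (\<lambda>u. u * g u) = exp (-b*y) * N"
    using core(4)[OF a b ab y] by (simp add: g_def N_def E_def)
  have fl: "f (\<theta>\<^sub>0 + s * u) * l (x - (\<theta>\<^sub>0 + s * u)) = K * g u" for u
  proof -
    have 1: "\<bar>s * u\<bar> = \<bar>u\<bar>" using s by (simp add: abs_mult)
    have 2: "\<bar>x - (\<theta>\<^sub>0 + s * u) - 0\<bar> = \<bar>y - u\<bar>"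
    proof -
      have "x - (\<theta>\<^sub>0 + s * u) - 0 = s * (y - u)" using s(3) by (simp add: x0_def algebra_simps)
      then show ?thesis using s(1) by (simp add: abs_mult)
    qed
    have "f (\<theta>\<^sub>0 + s * u) * l (x - (\<theta>\<^sub>0 + s * u)) =
        exp (- \<bar>u\<bar> / \<sigma>\<^sub>0) / (2 * \<sigma>\<^sub>0) * (exp (- \<bar>y - u\<bar> / \<sigma>\<^sub>\<epsilon>) / (2 * \<sigma>\<^sub>\<epsilon>))"
      unfolding f_def l_def laplace_density_def using 1 2 by simp
    also have "\<dots> = K * (exp (- a * \<bar>u\<bar>) * exp (- b * \<bar>y - u\<bar>))"
      by (simp add: K_def a_def b_def)
    also have "\<dots> = K * g u" by (simp add: g_def exp_diff exp_minus field_simps)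
    finally show ?thesis .
  qed
  have sub: "integral\<^sup>L lborel h = (\<integral>u. h (\<theta>\<^sub>0 + s * u) \<partial>lborel)" for h :: "real \<Rightarrow> real"
    using lborel_integral_real_affine[OF s(2), of h \<theta>\<^sub>0] s(1) by simp
  have den: "(\<integral>\<theta>. f \<theta> * l (x - \<theta>) \<partial>lborel) = K * (exp (-b*y) * D)"
    by (subst sub) (simp add: fl C(3) D_def)
  have num: "(\<integral>\<theta>. \<theta> * f \<theta> * l (x - \<theta>) \<partial>lborel) = \<theta>\<^sub>0 * (K * (exp (-b*y) * D)) + s * (K * (exp (-b*y) * N))"
  proof -
    have "(\<integral>\<theta>. \<theta> * f \<theta> * l (x - \<theta>) \<partial>lborel) = (\<integral>u. (\<theta>\<^sub>0 + s * u) * (K * g u) \<partial>lborel)"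
      by (subst sub) (simp add: fl mult.assoc)
    also have "\<dots> = (\<integral>u. \<theta>\<^sub>0 * K * g u + s * K * (u * g u) \<partial>lborel)"
      by (simp add: algebra_simps)
    also have "\<dots> = \<theta>\<^sub>0 * K * integral\<^sup>L lborel g + s * K * integral\<^sup>L lborel (\<lambda>u. u * g u)"
    proof -
      have C2: "integrable lborel (\<lambda>u. u * g u)" using C(2) by (simp add: g_def)
      have i1: "integrable lborel (\<lambda>u. \<theta>\<^sub>0 * K * g u)" using C(1) by simp
      have i2: "integrable lborel (\<lambda>u. s * K * (u * g u))" using C2 by simp
      show ?thesis by (simp add: Bochner_Integration.integral_add[OF i1 i2])
    qed
    also have "\<dots> = \<theta>\<^sub>0 * (K * (exp (-b*y) * D)) + s * (K * (exp (-b*y) * N))"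
      using C(3) C4 by (simp add: D_def)
    finally show ?thesis .
  qed
  have bEa: "b * E - a \<noteq> 0"
  proof (cases "a < b")
    case True
    then have "E \<ge> 1" using y by (simp add: E_def)
    then have "b * E \<ge> b" using b by simp
    then show ?thesis using True by simp
  next
    case False
    then have "b < a" using ab by simp
    then have "E \<le> 1" using y by (simp add: E_def mult_nonpos_nonneg)
    then have "b * E \<le> b" using b by (simp add: mult_left_le)
    then show ?thesis using \<open>b < a\<close> by simp
  qed
  have Dpos: "D > 0"
  proof -
    have "(E-1)/(b-a) \<ge> 0"
    proof (cases "a < b")
      case True
      then have "E \<ge> 1" using y by (simp add: E_def)
      then show ?thesis using True by simp
    next
      case False
      then have "b < a" using ab by simp
      then have "E \<le> 1" using y by (simp add: E_def mult_nonpos_nonneg)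
      then show ?thesis using \<open>b < a\<close> by (simp add: divide_nonpos_neg)
    qed
    moreover have "1/(a+b) > 0" "E/(a+b) \<ge> 0" using a b by (auto simp: E_def)
    ultimately show ?thesis unfolding D_def by linarith
  qed
  have pm: "posterior_mean f l x = \<theta>\<^sub>0 + s * (N / D)"
  proof -
    have "exp (-b*y) > 0" by simp
    then have nz: "K * (exp (-b*y) * D) \<noteq> 0" using K Dpos by simp
    show ?thesis unfolding posterior_mean_def num den using nz
      by (simp add: field_simps)
  qed
  have ND: "N / D = b/(b*E-a) * ((y - 2*a/(b^2-a^2))*E + 2*a/(b^2-a^2))"
    unfolding N_def D_def by (rule alg[OF a b ab bEa])
  have fin: "s * (N / D) = sgn x0 * (b/(b*E-a) * ((y - 2*a/(b^2-a^2))*E + 2*a/(b^2-a^2)))"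
  proof (cases "x0 = 0")
    case True
    then show ?thesis by (simp add: ND y_def E_def)
  next
    case False
    then have "s = sgn x0" by (auto simp: s_def sgn_if)
    then show ?thesis by (simp add: ND)
  qed
  show ?thesis
    unfolding Let_def f_def[symmetric] l_def[symmetric] pm fin
    by (simp add: a_def[symmetric] b_def[symmetric] x0_def[symmetric] y_def[symmetric] E_def[symmetric] mult.assoc)
qed

end
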